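(* Let $\gamma>0$ and let $w_\gamma$ be the function defined below. Define $$W_\gamma(t)=\begin{cases}\int_t^\infty w_\gamma(\xi)\,d\xi,& t\ge0,\\ -\int_{-\infty}^t w_\gamma(\xi)\,d\xi,& t<0.\end{cases}$$ Then $W_\gamma$ is a bounded, odd function in $L^1(\mathbb{R})$ with: (i) $|W_\gamma(t)|$ is continuous and monotone decreasing for $t\ge0$; in particular $\|W_\gamma\|_\infty=W_\gamma(0)=1/2$. (ii) $|W_\gamma(t)|\le G^{(W)}(\gamma|t|)$, where for $\eta\ge0$, $G^{(W)}(\eta)=1/2$ if $0\le\eta\le\eta^*$ and $G^{(W)}(\eta)=35\mathrm{e}^2\eta^4u_{2/7}(\eta)$ if $\eta>\eta^*$, with $\eta^*$ the largest real solution of $35\mathrm{e}^2\eta^4u_{2/7}(\eta)=1/2$. (iii) There is a constant $K$ (independent of $\gamma$) such that $\|W_\gamma\|_1\le K/\gamma$. (iv) For $t>0$ let $I_\gamma(t)=\int_t^\infty W_\gamma(\xi)\,d\xi$. Then there is $\zeta^*>0$ such that $|I_\gamma(t)|\le G^{(I)}(\gamma|t|)$, where for $\zeta\ge0$, $$G^{(I)}(\zeta)=\frac1\gamma\cdot\begin{cases}K/2,&0\le\zeta\le\zeta^*,\\130\,\mathrm{e}^2\zeta^{10}u_{2/7}(\zeta),&\zeta>\zeta^*,\end{cases}$$ with $K$ as in (iii).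
   Context: For $a>0$ and $\eta>1$, $u_a(\eta)=\exp(-a\eta/\ln^2\eta)$. The function $w_\gamma$ is defined as follows: let $a_n=a_1(n\ln^2n)^{-1}$ for $n\ge2$ with $a_1>0$ chosen so that $\sum_{n\ge1}a_n=\gamma/2$, and $w_\gamma(t)=c_\gamma\prod_{n=1}^\infty(\sin(a_nt)/(a_nt))^2$ with $c_\gamma>0$ chosen so that $\int_{\mathbb R} w_\gamma=1$. It is even, non-negative, integrable, its Fourier transform vanishes outside $[-\gamma,\gamma]$, and $w_\gamma(t)\le 2(\mathrm{e}\gamma)^2t\exp(-\frac27\gamma t/\ln^2(\gamma t))$ for $t\ge\mathrm{e}^{1/\sqrt2}/\gamma$. *)

theory Defs
  imports "HOL-Analysis.Analysis"
begin

definition u :: "real \<Rightarrow> real \<Rightarrow> real" where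
  "u a \<eta> = exp (- a * \<eta> / (ln \<eta>)^2)"

definition sinc :: "real \<Rightarrow> real" where
  "sinc x = (if x = 0 then 1 else sin x / x)"

text \<open>S = sum over n \<ge> 2 of 1/(n ln^2 n); a_1 is chosen so that a_1 (1 + S) = gamma/2\<close>
definition aseq :: "real \<Rightarrow> nat \<Rightarrow> real" where
  "aseq \<gamma> n =
     (let a1 = (\<gamma> / 2) / (1 + (\<Sum>k. 1 / (real (k + 2) * (ln (real (k + 2)))^2)))
      in if n = 1 then a1 else a1 / (real n * (ln (real n))^2))"

definition wprod :: "real \<Rightarrow> real \<Rightarrow> real" where
  "wprod \<gamma> t = (\<Prod>n. (sinc (aseq \<gamma> (Suc n) * t))^2)"

definition cgamma :: "real \<Rightarrow> real" where
  "cgamma \<gamma> = 1 / (LINT t|lborel. wprod \<gamma> t)"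

definition w :: "real \<Rightarrow> real \<Rightarrow> real" where
  "w \<gamma> t = cgamma \<gamma> * wprod \<gamma> t"

definition W :: "real \<Rightarrow> real \<Rightarrow> real" where
  "W \<gamma> t = (if t \<ge> 0 then (LINT \<xi>:{t..}|lborel. w \<gamma> \<xi>)
              else - (LINT \<xi>:{..t}|lborel. w \<gamma> \<xi>))"

definition etaStar :: real where
  "etaStar = (GREATEST \<eta>. \<eta> > 1 \<and> 35 * exp 2 * \<eta>^4 * u (2/7) \<eta> = 1/2)"

definition GW :: "real \<Rightarrow> real" where
  "GW \<eta> = (if \<eta> \<le> etaStar then 1/2 else 35 * exp 2 * \<eta>^4 * u (2/7) \<eta>)"

definition Iint :: "real \<Rightarrow> real \<Rightarrow> real" where
  "Iint \<gamma> t = (LINT \<xi>:{t..}|lborel. W \<gamma> \<xi>)"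

definition GI :: "real \<Rightarrow> real \<Rightarrow> real \<Rightarrow> real \<Rightarrow> real" where
  "GI K \<zeta>s \<gamma> \<zeta> = (1 / \<gamma>) * (if \<zeta> \<le> \<zeta>s then K / 2 else 130 * exp 2 * \<zeta>^10 * u (2/7) \<zeta>)"

end

theory Submission
  imports Defs "HOL-Real_Asymp.Real_Asymp"
begin


definition Sser :: real where
  "Sser = (\<Sum>k. 1 / (real (k + 2) * (ln (real (k + 2)))^2))"

lemma tele_bound:
  fixes n :: nat assumes "n \<ge> 3"
  shows "1 / (real n * (ln (real n))^2) \<le> 1 / ln (real n - 1) - 1 / ln (real n)"
proof -
  have p1: "ln (real n - 1) > 0" using assms by simp
  have p2: "ln (real n) > 0" using assms by simp
  have le: "ln (real n - 1) \<le> ln (real n)" using assms by simp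
  have d: "ln (real n) - ln (real n - 1) \<ge> 1 / real n"
  proof -
    have "ln ((real n - 1) / real n) \<le> (real n - 1) / real n - 1"
      using assms by (intro ln_le_minus_one) auto
    moreover have "ln ((real n - 1) / real n) = ln (real n - 1) - ln (real n)"
      using assms by (subst ln_div) auto
    moreover have "(real n - 1) / real n - 1 = - 1 / real n" using assms by (simp add: field_simps)
    ultimately show ?thesis by simp
  qed
  have "1 / ln (real n - 1) - 1 / ln (real n) = (ln (real n) - ln (real n - 1)) / (ln (real n - 1) * ln (real n))"
    using p1 p2 by (simp add: field_simps)
  also have "\<dots> \<ge> (1 / real n) / (ln (real n) * ln (real n))"
    using p1 p2 le d assms
    by (intro frac_le) (auto intro: mult_right_mono mult_pos_pos)
  finally show ?thesis by (simp add: power2_eq_square mult.assoc)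
qed

lemma Sser_summable_bound:
  "summable (\<lambda>k. 1 / (real (k + 2) * (ln (real (k + 2)))^2)) \<and> Sser \<le> 5/2 \<and> Sser \<ge> 0"
proof -
  define t where "t k = 1 / (real (k + 2) * (ln (real (k + 2)))^2)" for k :: nat
  define f where "f k = 1 / ln (real k + 3)" for k :: nat
  have t_nonneg: "t k \<ge> 0" for k unfolding t_def by simp
  have fl: "f \<longlonglongrightarrow> 0" unfolding f_def by real_asymp
  have tel: "(\<lambda>k. f k - f (Suc k)) sums (f 0 - 0)"
    by (rule telescope_sums'[OF fl])
  have tb: "t (k + 2) \<le> f k - f (Suc k)" for k
  proof -
    have "t (k+2) \<le> 1 / ln (real (k+4) - 1) - 1 / ln (real (k+4))"
      unfolding t_def using tele_bound[of "k+4"] by (simp add: add.commute)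
    also have "\<dots> = f k - f (Suc k)" unfolding f_def by (simp add: add.commute)
    finally show ?thesis .
  qed
  have sm2: "summable (\<lambda>k. t (k + 2))"
    by (rule summable_comparison_test[of _ "\<lambda>k. f k - f (Suc k)"])
       (use tb t_nonneg sums_summable[OF tel] in auto)
  hence sm: "summable t" using summable_iff_shift by blast
  have s2: "(\<Sum>k. t (k+2)) \<le> f 0"
    using suminf_le[OF _ sm2 sums_summable[OF tel]] tb sums_unique[OF tel] by force
  have split: "suminf t = (\<Sum>k. t (k+2)) + (\<Sum>i<2. t i)"
    using suminf_split_initial_segment[OF sm, of 2] by simp
  have l2: "ln (2::real) \<ge> 2/3" by (rule ln2_ge_two_thirds)
  have l3: "ln (3::real) \<ge> 1"
  proof -
    have "exp 1 \<le> (3::real)" by (rule exp_le)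
    thus ?thesis by (subst ln_ge_iff) auto
  qed
  have t0: "t 0 \<le> 9/8"
  proof -
    have "(2/3)^2 \<le> (ln (2::real))^2" using l2 by (intro power_mono) auto
    hence "2 * (4/9) \<le> 2 * (ln (2::real))^2" by (simp add: power2_eq_square)
    thus ?thesis unfolding t_def by (simp add: field_simps)
  qed
  have t1: "t 1 \<le> 1/3"
  proof -
    have "1 \<le> (ln (3::real))^2" using l3 by (simp add: one_le_power)
    thus ?thesis unfolding t_def by (simp add: field_simps)
  qed
  have f0: "f 0 = 1 / ln 3" unfolding f_def by simp
  have f0b: "f 0 \<le> 1" unfolding f0 using l3 by simp
  have "Sser = suminf t" unfolding Sser_def t_def by simp
  also have "\<dots> \<le> 5/2" using split s2 t0 t1 f0b by (simp add: numeral_2_eq_2)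
  finally have "Sser \<le> 5/2" .
  moreover have "Sser \<ge> 0" unfolding Sser_def using sm t_nonneg unfolding t_def
    by (intro suminf_nonneg) auto
  ultimately show ?thesis using sm unfolding t_def by auto
qed



lemma cos_lower: "cos (x::real) \<ge> 1 - x^2/2"
proof -
  have "cos x = 1 - 2 * (sin (x/2))^2"
    using cos_double_sin[of "x/2"] by simp
  moreover have "(sin (x/2))^2 \<le> (x/2)^2"
    using abs_sin_x_le_abs_x[of "x/2"] by (metis abs_le_square_iff)
  ultimately show ?thesis by (simp add: power_divide)
qed

lemma sin_lower: assumes "(x::real) \<ge> 0" shows "sin x \<ge> x - x^3/6"
proof -
  let ?g = "\<lambda>x::real. sin x - x + x^3/6"
  have "?g 0 \<le> ?g x"
  proof (rule DERIV_nonneg_imp_nondecreasing[OF assms])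
    fix y :: real
    show "\<exists>d. DERIV ?g y :> d \<and> d \<ge> 0"
      using cos_lower[of y]
      by (intro exI[of _ "cos y - 1 + y^2/2"])
         (auto intro!: derivative_eq_intros simp: algebra_simps power2_eq_square power3_eq_cube)
  qed
  thus ?thesis by simp
qed

lemma sinc_even: "sinc (-y) = sinc y" unfolding sinc_def by simp

lemma sinc_abs_le1: "\<bar>sinc y\<bar> \<le> 1"
  unfolding sinc_def using abs_sin_x_le_abs_x[of y]
  by (auto simp: abs_divide divide_le_eq_1)

lemma sinc_sq_le1: "(sinc y)^2 \<le> 1" "0 \<le> (sinc y)^2"
  using sinc_abs_le1[of y] by (auto simp: abs_square_le_1)

lemma sinc_sq_le_inv: assumes "y \<noteq> 0" shows "(sinc y)^2 \<le> 1 / y^2"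
proof -
  have "(sinc y)^2 = (sin y)^2 / y^2" using assms unfolding sinc_def by (simp add: power_divide)
  also have "\<dots> \<le> 1 / y^2" using assms by (intro divide_right_mono) (auto simp: abs_square_le_1)
  finally show ?thesis .
qed

lemma sinc_sq_lower: "1 - y^2/3 \<le> (sinc y)^2"
proof (cases "y^2 \<le> 6")
  case False thus ?thesis using sinc_sq_le1(2)[of y] by linarith
next
  case True
  have s: "sinc y \<ge> 1 - y^2/6"
  proof (cases "y = 0")
    case True thus ?thesis unfolding sinc_def by simp
  next
    case False
    have "sinc y = sinc \<bar>y\<bar>" by (cases "y \<ge> 0") (auto simp: sinc_even[of y, symmetric])
    also have "sinc \<bar>y\<bar> = sin \<bar>y\<bar> / \<bar>y\<bar>" using False unfolding sinc_def by simp
    also have "\<dots> \<ge> (\<bar>y\<bar> - \<bar>y\<bar>^3/6) / \<bar>y\<bar>"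
      using sin_lower[of "\<bar>y\<bar>"] False by (intro divide_right_mono) auto
    also have "(\<bar>y\<bar> - \<bar>y\<bar>^3/6) / \<bar>y\<bar> = 1 - y^2/6" using False
      by (simp add: field_simps power2_eq_square power3_eq_cube)
    finally show ?thesis .
  qed
  have "0 \<le> 1 - y^2/6" using True by simp
  hence "(1 - y^2/6)^2 \<le> (sinc y)^2" using s by (intro power_mono) auto
  moreover have "(1 - y^2/6)^2 = 1 - y^2/3 + (y^2/6)^2" by (simp add: power2_eq_square field_simps)
  hence "1 - y^2/3 \<le> (1 - y^2/6)^2" by simp
  ultimately show ?thesis by linarith
qed

definition A1 :: real where "A1 = (1/2) / (1 + Sser)"

lemma A1_bounds: "A1 \<ge> 1/7" "A1 \<le> 1/2" "A1 > 0"
  using Sser_summable_bound unfolding A1_def by (auto simp: field_simps)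

lemma aseq_1: "aseq 1 n = (if n = 1 then A1 else A1 / (real n * (ln (real n))^2))"
  unfolding aseq_def A1_def Sser_def Let_def by simp

lemma aseq_scale: "aseq \<gamma> n = \<gamma> * aseq 1 n"
  unfolding aseq_def Let_def by (simp add: field_simps)

lemma aseq_pos: "n \<ge> 1 \<Longrightarrow> aseq 1 n > 0"
  unfolding aseq_1 using A1_bounds by (auto simp: ln_gt_zero)

lemma aseq_le: assumes "n \<ge> 1" shows "aseq 1 n \<le> 2 * A1"
proof (cases "n = 1")
  case True thus ?thesis unfolding aseq_1 using A1_bounds by simp
next
  case False
  hence n2: "n \<ge> 2" using assms by simp
  have "ln (real n) \<ge> ln 2" using n2 by simp
  hence "ln (real n) \<ge> 2/3" using ln2_ge_two_thirds by linarith
  hence "(2/3)^2 \<le> (ln (real n))^2" by (intro power_mono) auto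
  hence "real n * (ln (real n))^2 \<ge> 2 * (4/9)" using n2
    by (intro mult_mono) (auto simp: power2_eq_square)
  hence "real n * (ln (real n))^2 \<ge> 1/2" by simp
  thus ?thesis unfolding aseq_1 using False A1_bounds by (simp add: field_simps)
qed

lemma aseq_sums: "(\<lambda>n. aseq 1 (Suc n)) sums (1/2)"
proof -
  have sm: "summable (\<lambda>k. 1 / (real (k + 2) * (ln (real (k + 2)))^2))"
    using Sser_summable_bound by blast
  have "(\<lambda>k. A1 * (1 / (real (k + 2) * (ln (real (k + 2)))^2))) sums (A1 * Sser)"
    unfolding Sser_def by (intro sums_mult summable_sums sm)
  hence "(\<lambda>k. aseq 1 (Suc (Suc k))) sums (A1 * Sser)"
    unfolding aseq_1 by (simp add: add.commute)
  hence "(\<lambda>n. aseq 1 (Suc n)) sums (A1 * Sser + aseq 1 (Suc 0))"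
    by (subst sums_Suc_iff[symmetric]) simp
  moreover have "A1 * Sser + aseq 1 (Suc 0) = 1/2"
    unfolding aseq_1 A1_def using Sser_summable_bound by (simp add: field_simps)
  ultimately show ?thesis by simp
qed



definition fac :: "real \<Rightarrow> nat \<Rightarrow> real" where
  "fac t n = (sinc (aseq 1 (Suc n) * t))^2"

lemma wprod_1: "wprod 1 t = prodinf (fac t)"
  unfolding wprod_def fac_def ..

lemma wprod_scale: "wprod \<gamma> t = wprod 1 (\<gamma> * t)"
  unfolding wprod_def by (simp add: aseq_scale[of \<gamma>] mult_ac)

lemma fac_bounds: "0 \<le> fac t n" "fac t n \<le> 1"
  unfolding fac_def by (rule sinc_sq_le1)+

lemma aseq_sq_summable: "summable (\<lambda>n. (aseq 1 (Suc n))^2)"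
proof (rule summable_comparison_test[of _ "\<lambda>n. 2 * A1 * aseq 1 (Suc n)"])
  show "summable (\<lambda>n. 2 * A1 * aseq 1 (Suc n))"
    using aseq_sums by (intro summable_mult sums_summable) auto
  show "\<exists>N. \<forall>n\<ge>N. norm ((aseq 1 (Suc n))\<^sup>2) \<le> 2 * A1 * aseq 1 (Suc n)"
    using aseq_le aseq_pos by (auto simp: power2_eq_square intro!: mult_right_mono less_imp_le)
qed

lemma aseq_sq_sum_le: "(\<Sum>n. (aseq 1 (Suc n))^2) \<le> 1/2"
proof -
  have "(\<Sum>n. (aseq 1 (Suc n))^2) \<le> (\<Sum>n. 2 * A1 * aseq 1 (Suc n))"
    using aseq_le aseq_pos aseq_sq_summable aseq_sums
    by (intro suminf_le) (auto simp: power2_eq_square intro!: mult_right_mono less_imp_le summable_mult sums_summable)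
  also have "\<dots> = 2 * A1 * (1/2)" using aseq_sums by (simp add: suminf_mult sums_unique[symmetric] sums_summable)
  also have "\<dots> \<le> 1/2" using A1_bounds by simp
  finally show ?thesis .
qed

lemma one_minus_fac: "1 - fac t n \<le> (aseq 1 (Suc n))^2 * t^2 / 3"
  unfolding fac_def using sinc_sq_lower[of "aseq 1 (Suc n) * t"] by (simp add: power_mult_distrib)

lemma fac_conv: "convergent_prod (fac t)"
proof (intro abs_convergent_prod_imp_convergent_prod summable_imp_abs_convergent_prod)
  show "summable (\<lambda>i. norm (fac t i - 1))"
  proof (rule summable_comparison_test[of _ "\<lambda>n. (aseq 1 (Suc n))^2 * (t^2 / 3)"])
    show "summable (\<lambda>n. (aseq 1 (Suc n))^2 * (t^2 / 3))"
      by (intro summable_mult2 aseq_sq_summable)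
    show "\<exists>N. \<forall>n\<ge>N. norm (norm (fac t n - 1)) \<le> (aseq 1 (Suc n))\<^sup>2 * (t\<^sup>2 / 3)"
    proof (intro exI allI impI)
      fix n
      have "norm (norm (fac t n - 1)) = 1 - fac t n" using fac_bounds[of t n] by simp
      thus "norm (norm (fac t n - 1)) \<le> (aseq 1 (Suc n))\<^sup>2 * (t\<^sup>2 / 3)"
        using one_minus_fac[of t n] by simp
    qed
  qed
qed

lemma wprod_LIMSEQ: "(\<lambda>N. \<Prod>i\<le>N. fac t i) \<longlonglongrightarrow> wprod 1 t"
  unfolding wprod_1 by (rule convergent_prod_LIMSEQ[OF fac_conv])

lemma partial_le: "M \<le> N \<Longrightarrow> (\<Prod>i\<le>N. fac t i) \<le> (\<Prod>i\<le>M. fac t i)"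
proof (induction N)
  case 0 thus ?case by simp
next
  case (Suc N)
  show ?case
  proof (cases "M = Suc N")
    case False
    hence "M \<le> N" using Suc by simp
    hence "(\<Prod>i\<le>N. fac t i) \<le> (\<Prod>i\<le>M. fac t i)" using Suc by simp
    moreover have "(\<Prod>i\<le>Suc N. fac t i) \<le> (\<Prod>i\<le>N. fac t i)"
      using fac_bounds by (auto simp: atMost_Suc intro!: mult_left_le_one_le prod_nonneg)
    ultimately show ?thesis by simp
  qed simp
qed

lemma wprod_le_partial: "wprod 1 t \<le> (\<Prod>i\<le>N. fac t i)"
  by (rule LIMSEQ_le_const2[OF wprod_LIMSEQ]) (use partial_le in auto)

lemma wprod_nonneg: "0 \<le> wprod 1 t"
  by (rule LIMSEQ_le_const[OF wprod_LIMSEQ]) (use fac_bounds in \<open>auto intro: prod_nonneg\<close>)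

lemma wprod_le1: "wprod 1 t \<le> 1"
  using wprod_le_partial[of t 0] fac_bounds[of t 0] by simp

lemma prod_ge_1_minus_sum:
  fixes f :: "nat \<Rightarrow> real"
  assumes "\<And>i. 0 \<le> f i" "\<And>i. f i \<le> (1::real)"
  shows "(\<Prod>i\<le>N. f i) \<ge> 1 - (\<Sum>i\<le>N. (1 - f i))"
proof (induction N)
  case 0 thus ?case by simp
next
  case (Suc N)
  let ?P = "\<Prod>i\<le>N. f i" and ?s = "\<Sum>i\<le>N. (1 - f i)"
  have s0: "?s \<ge> 0" using assms by (intro sum_nonneg) auto
  have "?P * f (Suc N) \<ge> (1 - ?s) * f (Suc N)" using Suc assms by (intro mult_right_mono) auto
  moreover have "(1 - ?s) * f (Suc N) \<ge> 1 - ?s - (1 - f (Suc N))"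
    using s0 assms[of "Suc N"] by (simp add: algebra_simps mult_left_le_one_le)
  ultimately show ?case by (simp add: atMost_Suc algebra_simps)
qed

lemma wprod_lower: "wprod 1 t \<ge> 1 - t^2 / 6"
proof (rule LIMSEQ_le_const[OF wprod_LIMSEQ], intro exI allI impI)
  fix N
  have "(\<Sum>i\<le>N. (1 - fac t i)) \<le> (\<Sum>i\<le>N. (aseq 1 (Suc i))^2 * (t^2/3))"
    by (intro sum_mono) (use one_minus_fac in simp)
  also have "\<dots> = (\<Sum>i\<le>N. (aseq 1 (Suc i))^2) * (t^2/3)" by (simp add: sum_distrib_right)
  also have "\<dots> \<le> (\<Sum>i. (aseq 1 (Suc i))^2) * (t^2/3)"
    using aseq_sq_summable by (intro mult_right_mono sum_le_suminf) auto
  also have "\<dots> \<le> (1/2) * (t^2/3)" using aseq_sq_sum_le by (intro mult_right_mono) auto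
  finally have "(\<Sum>i\<le>N. (1 - fac t i)) \<le> t^2/6" by simp
  thus "1 - t^2/6 \<le> (\<Prod>i\<le>N. fac t i)" using prod_ge_1_minus_sum[of "fac t" N] fac_bounds by fastforce
qed

lemma wprod_even: "wprod 1 (-t) = wprod 1 t"
  unfolding wprod_1 fac_def by (simp add: sinc_even[of "_ * t", symmetric])

lemma sinc_measurable[measurable]: "sinc \<in> borel_measurable borel"
  unfolding sinc_def by measurable

lemma wprod_measurable: "wprod 1 \<in> borel_measurable lborel"
proof (rule borel_measurable_LIMSEQ_real[OF wprod_LIMSEQ])
  fix N show "(\<lambda>t. \<Prod>i\<le>N. fac t i) \<in> borel_measurable lborel"
    unfolding fac_def by measurable
qed



abbreviation p :: "real \<Rightarrow> real" where "p \<equiv> wprod 1"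

lemma fac0: "fac t 0 = (sinc (A1 * t))^2"
  unfolding fac_def aseq_1 by simp

lemma p_le_inv: assumes "t \<noteq> 0" shows "p t \<le> 1 / (A1 * t)^2"
  using wprod_le_partial[of t 0] sinc_sq_le_inv[of "A1 * t"] A1_bounds assms
  by (simp add: fac0)

lemma p_le_rat: "p t \<le> 100 / (1 + t^2)"
proof (cases "t^2 \<le> 1")
  case True
  hence "100 / (1 + t^2) \<ge> 100 / 2" by (intro divide_left_mono) (auto simp: add_pos_nonneg)
  thus ?thesis using wprod_le1[of t] by simp
next
  case False
  hence t0: "t \<noteq> 0" by auto
  have "p t \<le> 1 / (A1 * t)^2" by (rule p_le_inv[OF t0])
  also have "\<dots> = (1/A1)^2 / t^2" by (simp add: power_mult_distrib power_divide)
  also have "\<dots> \<le> 49 / t^2"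
  proof -
    have "1/A1 \<le> 7" using A1_bounds by (simp add: field_simps)
    hence "(1/A1)^2 \<le> 7^2" using A1_bounds by (intro power_mono) auto
    thus ?thesis using t0 by (intro divide_right_mono) auto
  qed
  also have "\<dots> \<le> 100 / (1 + t^2)"
  proof -
    have tp: "t^2 > 0" using t0 by simp
    have "49 * (1 + t^2) \<le> 100 * t^2" using False by simp
    thus ?thesis using tp by (simp add: divide_simps add_pos_nonneg)
  qed
  finally show ?thesis .
qed

lemma integrable_rat: "integrable lborel (\<lambda>t::real. inverse (1 + t^2))"
proof -
  have "set_integrable lborel (einterval (-\<infinity>) \<infinity>) (\<lambda>t::real. inverse (1 + t^2))"
  proof (rule interval_integral_FTC_nonneg(1)[where F=arctan and A="-pi/2" and B="pi/2"])
    show "((arctan \<circ> real_of_ereal) \<longlongrightarrow> - pi / 2) (at_right (- \<infinity>))"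
      unfolding ereal_tendsto_simps using tendsto_arctan_at_bot by simp
    show "((arctan \<circ> real_of_ereal) \<longlongrightarrow> pi / 2) (at_left \<infinity>)"
      unfolding ereal_tendsto_simps using tendsto_arctan_at_top by simp
  qed (auto intro!: derivative_eq_intros continuous_intros simp: add_nonneg_eq_0_iff field_simps power2_eq_square)
  thus ?thesis by (simp add: set_integrable_def einterval_def)
qed

lemma p_integrable: "integrable lborel p"
proof (rule Bochner_Integration.integrable_bound[OF _ wprod_measurable])
  show "integrable lborel (\<lambda>t::real. 100 * inverse (1 + t^2))"
    using integrable_rat by simp
  show "AE x in lborel. norm (p x) \<le> norm (100 * inverse (1 + x\<^sup>2))"
    using p_le_rat wprod_nonneg by (auto simp: field_simps)
qed

lemma p_integral_ge1: "(LINT t|lborel. p t) \<ge> 1"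
proof -
  have "(LINT t|lborel. indicator {-1..1::real} t * (1/2::real)) \<le> (LINT t|lborel. p t)"
  proof (rule integral_mono'[OF p_integrable])
    fix t :: real
    show "indicator {-1..1} t * (1/2) \<le> p t"
    proof (cases "t \<in> {-1..1}")
      case True
      hence "t^2 \<le> 1" by (auto simp: abs_square_le_1)
      thus ?thesis using True wprod_lower[of t] by simp
    qed (simp add: wprod_nonneg)
  qed (simp add: wprod_nonneg)
  moreover have "(LINT t|lborel. indicator {-1..1::real} t * (1/2::real)) = 1"
  proof -
    have "(LINT t|lborel. indicator {-1..1::real} t * (1/2::real)) = (LINT t|lborel. indicator {-1..1::real} t) * (1/2::real)"
      by (rule integral_mult_left_zero)
    also have "(LINT t|lborel. indicator {-1..1::real} t) = (2::real)" by simp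
    finally show ?thesis by simp
  qed
  ultimately show ?thesis by simp
qed

lemma cgamma1: "cgamma 1 > 0" "cgamma 1 \<le> 1"
  unfolding cgamma_def using p_integral_ge1 by auto

lemma wprod_integral_scale: assumes "\<gamma> > 0"
  shows "(LINT t|lborel. wprod \<gamma> t) = (LINT t|lborel. p t) / \<gamma>"
proof -
  have "(LINT t|lborel. p t) = \<bar>\<gamma>\<bar> *\<^sub>R (LINT t|lborel. p (0 + \<gamma> * t))"
    using assms by (intro lborel_integral_real_affine) auto
  moreover have "(\<lambda>t. wprod \<gamma> t) = (\<lambda>t. p (\<gamma> * t))" by (rule ext, rule wprod_scale)
  ultimately show ?thesis using assms by (simp only: add_0_left) (simp add: field_simps)
qed

lemma cgamma_scale: "\<gamma> > 0 \<Longrightarrow> cgamma \<gamma> = \<gamma> * cgamma 1"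
  unfolding cgamma_def using wprod_integral_scale[of \<gamma>] by simp

lemma w_scale: "\<gamma> > 0 \<Longrightarrow> w \<gamma> t = \<gamma> * w 1 (\<gamma> * t)"
  unfolding w_def using cgamma_scale[of \<gamma>] wprod_scale[of \<gamma> t] by simp

abbreviation w1 where "w1 \<equiv> w 1"

lemma w1_nonneg: "0 \<le> w1 t" unfolding w_def using cgamma1 wprod_nonneg by simp
lemma w1_le_p: "w1 t \<le> p t" unfolding w_def using cgamma1 wprod_nonneg
  by (simp add: mult_left_le_one_le)
lemma w1_even: "w1 (-t) = w1 t" unfolding w_def using wprod_even by simp
lemma w1_measurable[measurable]: "w1 \<in> borel_measurable borel"
  unfolding w_def using wprod_measurable by simp
lemma w1_integrable: "integrable lborel w1"
  unfolding w_def using p_integrable by simp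
lemma w1_integral: "(LINT t|lborel. w1 t) = 1"
  unfolding w_def cgamma_def using p_integral_ge1 by simp



lemma exp2_ge6: "exp (2::real) \<ge> 6"
proof -
  have "(1 + 2 / real (10::nat)) ^ 10 \<le> exp (2::real)"
    by (rule exp_ge_one_plus_x_over_n_power_n) auto
  moreover have "(1 + 2 / real (10::nat)) ^ 10 \<ge> (6::real)" by (simp add: power_def)
  ultimately show ?thesis by linarith
qed

lemma ln_le_e: assumes "(y::real) > 0" shows "ln y \<le> y / exp 1"
proof -
  have "ln (y / exp 1) \<le> y / exp 1 - 1" using assms by (intro ln_le_minus_one) auto
  moreover have "ln (y / exp 1) = ln y - 1" using assms by (simp add: ln_div)
  ultimately show ?thesis by simp
qed

lemma ln_sq_le_sqrt: assumes "(x::real) \<ge> 1" shows "(ln x)^2 \<le> 8/3 * sqrt x"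
proof -
  let ?y = "sqrt (sqrt x)"
  have y0: "?y > 0" using assms by simp
  have y1: "?y \<ge> 1" using assms by simp
  have "?y ^ 4 = (?y^2)^2" by (simp flip: power_mult)
  hence "?y ^ 4 = x" using assms by simp
  hence "ln x = ln (?y ^ 4)" by simp
  also have "\<dots> = 4 * ln ?y" using y0 by (simp add: ln_realpow)
  finally have lx: "ln x = 4 * ln ?y" .
  have l0: "0 \<le> ln ?y" using y1 by simp
  have "ln ?y \<le> ?y / exp 1" by (rule ln_le_e[OF y0])
  hence "(ln ?y)^2 \<le> (?y / exp 1)^2" using l0 by (intro power_mono) auto
  also have "\<dots> = sqrt x / exp 2"
    using assms by (simp add: power_divide exp_double[symmetric] power2_eq_square[of "exp 1"])
  finally have "(ln x)^2 \<le> 16 * (sqrt x / exp 2)" unfolding lx by (simp add: power_mult_distrib)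
  also have "\<dots> \<le> 16 * (sqrt x / 6)"
    using exp2_ge6 assms by (intro mult_left_mono divide_left_mono) auto
  finally show ?thesis by simp
qed

lemma exp9_le: "exp (9::real) \<le> 10000"
proof -
  have "exp (9::real) = (exp 1)^9" by (simp add: exp_of_nat_mult[symmetric])
  also have "\<dots> \<le> (272/100)^9" using e_less_272 by (intro power_mono) auto
  also have "\<dots> \<le> 10000" by (simp add: power_divide)
  finally show ?thesis .
qed

lemma ln_ge9: "(s::real) \<ge> 10000 \<Longrightarrow> ln s \<ge> 9"
  using exp9_le by (subst ln_ge_iff) auto

lemma ln_fact_bound: "N \<ge> 1 \<Longrightarrow> (\<Sum>n=1..N. ln (real n)) \<le> real N * ln (real N) - real N + 1 + ln (real N)"
proof (induction N rule: dec_induct)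
  case base thus ?case by simp
next
  case (step N)
  have N1: "real N \<ge> 1" using step by simp
  have key: "ln (real (Suc N)) - ln (real N) \<ge> 1 / real (Suc N)"
  proof -
    have "ln (real N / real (Suc N)) \<le> real N / real (Suc N) - 1"
      using N1 by (intro ln_le_minus_one) auto
    moreover have "ln (real N / real (Suc N)) = ln (real N) - ln (real (Suc N))" using N1 by (simp add: ln_div)
    moreover have "real N / real (Suc N) - 1 = - 1 / real (Suc N)" by (simp add: field_simps)
    ultimately show ?thesis by simp
  qed
  hence "real (Suc N) * (ln (real (Suc N)) - ln (real N)) \<ge> 1"
    by (simp add: field_simps del: of_nat_Suc)
  hence "(real N + 1) * ln (real N + 1) - (real N + 1) * ln (real N) \<ge> 1"
    by (simp add: algebra_simps)
  thus ?case using step by (simp add: algebra_simps)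
qed



lemma p_partial_exp:
  assumes t: "t > 0" and N: "N \<ge> 1"
  shows "p t \<le> exp (-2 * (\<Sum>n=1..N. ln (aseq 1 n * t)))"
proof -
  have "p t \<le> (\<Prod>i\<le>N-1. fac t i)" by (rule wprod_le_partial)
  also have "(\<Prod>i\<le>N-1. fac t i) = (\<Prod>i<N. fac t i)"
    using N by (metis Suc_diff_1 lessThan_Suc_atMost less_le_trans zero_less_one)
  also have "\<dots> = (\<Prod>n=1..N. (sinc (aseq 1 n * t))^2)"
    unfolding fac_def by (simp add: prod.atLeast1_atMost_eq)
  also have "\<dots> \<le> (\<Prod>n=1..N. exp (-2 * ln (aseq 1 n * t)))"
  proof (intro prod_mono conjI)
    fix n assume n: "n \<in> {1..N}"
    hence y: "aseq 1 n * t > 0" using aseq_pos t by auto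
    have l2: "2 * ln (aseq 1 n * t) = ln ((aseq 1 n * t)^2)" using y by (simp add: ln_realpow)
    have "exp (-2 * ln (aseq 1 n * t)) = exp (- ln ((aseq 1 n * t)^2))" using l2 by simp
    also have "\<dots> = 1 / (aseq 1 n * t)^2" using y by (auto simp: exp_minus inverse_eq_divide)
    finally have "exp (-2 * ln (aseq 1 n * t)) = 1 / (aseq 1 n * t)^2" .
    thus "(sinc (aseq 1 n * t))^2 \<le> exp (-2 * ln (aseq 1 n * t))"
    proof -
      have "aseq 1 n * t \<noteq> 0" using y by linarith
      from sinc_sq_le_inv[OF this] show ?thesis using \<open>exp (-2 * ln (aseq 1 n * t)) = 1 / (aseq 1 n * t)^2\<close> by simp
    qed
  qed (simp add: sinc_sq_le1)
  also have "\<dots> = exp (-2 * (\<Sum>n=1..N. ln (aseq 1 n * t)))"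
    by (simp add: exp_sum sum_distrib_left)
  finally show ?thesis .
qed

lemma p_bound_N:
  assumes t: "t > 0" and N: "N \<ge> 3" and Nx: "real N * (ln (real N))^2 \<le> A1 * t"
  shows "p t \<le> exp (-2 * (real N - 1 - ln (real N)))"
proof -
  define x where "x = A1 * t"
  have x0: "x > 0" using t A1_bounds unfolding x_def by simp
  have lnN1: "ln (real N) \<ge> 1"
  proof -
    have "exp 1 \<le> (3::real)" by (rule exp_le)
    hence "exp 1 \<le> real N" using N by simp
    thus ?thesis using N by (subst ln_ge_iff) auto
  qed
  have llN: "ln (ln (real N)) \<ge> 0" using lnN1 by simp
  have tm: "ln (aseq 1 n * t) \<ge> ln x - ln (real n) - 2 * ln (ln (real N))" if n: "n \<in> {1..N}" for n
  proof (cases "n = 1")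
    case True thus ?thesis unfolding aseq_1 x_def using llN by simp
  next
    case False
    hence n2: "n \<ge> 2" using n by auto
    have lnn: "ln (real n) > 0" using n2 by simp
    have "aseq 1 n * t = x / (real n * (ln (real n))^2)" unfolding aseq_1 x_def using False by simp
    hence "ln (aseq 1 n * t) = ln x - ln (real n) - 2 * ln (ln (real n))"
      using x0 lnn n2 by (simp add: ln_div ln_mult ln_realpow)
    moreover have "ln (ln (real n)) \<le> ln (ln (real N))" using lnn n by simp
    ultimately show ?thesis by simp
  qed
  have "(\<Sum>n=1..N. ln (aseq 1 n * t)) \<ge> (\<Sum>n=1..N. (ln x - 2 * ln (ln (real N))) - ln (real n))"
    by (intro sum_mono) (use tm in \<open>fastforce\<close>)
  also have "(\<Sum>n=1..N. (ln x - 2 * ln (ln (real N))) - ln (real n))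
      = real N * (ln x - 2 * ln (ln (real N))) - (\<Sum>n=1..N. ln (real n))"
    by (simp add: sum_subtractf)
  finally have s1: "(\<Sum>n=1..N. ln (aseq 1 n * t)) \<ge>
      real N * (ln x - 2 * ln (ln (real N))) - (real N * ln (real N) - real N + 1 + ln (real N))"
    using ln_fact_bound[of N] N by simp
  have "ln (real N * (ln (real N))^2) \<le> ln x"
    using Nx x0 N lnN1 unfolding x_def by (subst ln_le_cancel_iff) auto
  hence "ln (real N) + 2 * ln (ln (real N)) \<le> ln x"
    using N lnN1 by (simp add: ln_mult ln_realpow)
  hence "real N * (ln x - 2 * ln (ln (real N)) - ln (real N)) \<ge> 0" by simp
  hence "(\<Sum>n=1..N. ln (aseq 1 n * t)) \<ge> real N - 1 - ln (real N)"
    using s1 by (simp add: algebra_simps)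
  hence "-2 * (\<Sum>n=1..N. ln (aseq 1 n * t)) \<le> -2 * (real N - 1 - ln (real N))" by simp
  thus ?thesis using p_partial_exp[OF t, of N] N by (meson exp_le_cancel_iff order_trans le_trans one_le_numeral)
qed



definition E :: "real \<Rightarrow> real" where "E s = exp (-(2/7) * s / (ln s)^2)"

lemma p_decay:
  assumes t: "t \<ge> 10000"
  shows "p t \<le> exp 4 / 4 * t^2 * E t"
proof -
  define x where "x = A1 * t"
  have "(1/7) * 10000 \<le> A1 * t" using t A1_bounds by (intro mult_mono) auto
  hence x1: "x \<ge> 1369" unfolding x_def by simp
  have "A1 * t \<le> (1/2) * t" using t A1_bounds by (intro mult_right_mono) auto
  hence xt: "x \<le> t / 2" unfolding x_def by simp
  have lx1: "ln x \<ge> 1"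
  proof -
    have "exp 1 \<le> (3::real)" by (rule exp_le)
    thus ?thesis using x1 by (subst ln_ge_iff) auto
  qed
  define q where "q = x / (ln x)^2"
  have sq: "sqrt x \<ge> 37" using x1 real_sqrt_le_mono[of 1369 x] by simp
  have lnsq: "(ln x)^2 \<le> 8/3 * sqrt x" using x1 by (intro ln_sq_le_sqrt) auto
  have lxp: "(ln x)^2 > 0" using lx1 by simp
  have "q \<ge> x / (8/3 * sqrt x)" unfolding q_def using lxp lnsq x1 by (intro divide_left_mono) auto
  also have "x / (8/3 * sqrt x) = 3/8 * sqrt x" using x1 by (simp add: field_simps real_sqrt_mult_self[symmetric]
      del: real_sqrt_mult_self) (metis real_sqrt_pow2 less_le_trans power2_eq_square zero_less_numeral le_numeral_extra(3) less_eq_real_def x1 order.trans)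
  finally have q3: "q \<ge> 3" using sq by simp
  define N where "N = nat \<lfloor>q\<rfloor>"
  have NqA: "real N \<le> q" using q3 unfolding N_def by linarith
  have NqB: "real N > q - 1" using q3 unfolding N_def by linarith
  have N3: "N \<ge> 3" using q3 unfolding N_def by linarith
  have qx: "q \<le> x" unfolding q_def using lx1 x1
    by (simp add: divide_le_eq one_le_power)
  have lnN: "ln (real N) \<le> ln x" using NqA qx N3 by simp
  have lnN0: "ln (real N) \<ge> 0" using N3 by simp
  have "real N * (ln (real N))^2 \<le> q * (ln x)^2"
    using NqA lnN lnN0 q3 by (intro mult_mono power_mono) auto
  also have "\<dots> = x" unfolding q_def using lxp by simp
  finally have Nx: "real N * (ln (real N))^2 \<le> A1 * t" unfolding x_def .
  have tpos: "t > 0" using t by simp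
  have "p t \<le> exp (-2 * (real N - 1 - ln (real N)))" by (rule p_bound_N[OF tpos N3 Nx])
  also have "\<dots> \<le> exp (-2 * (q - 2 - ln x))" using NqB lnN by simp
  also have "exp (-2 * (q - 2 - ln x)) = exp 4 * exp (ln x) ^ 2 * exp (-2 * q)"
    by (simp add: exp_add[symmetric] exp_of_nat_mult[symmetric] algebra_simps)
  also have "\<dots> = exp 4 * x^2 * exp (-2 * q)" using x1 by simp
  also have "\<dots> \<le> exp 4 * (t/2)^2 * exp (-(2/7) * t / (ln t)^2)"
  proof (intro mult_mono)
    show "x^2 \<le> (t/2)^2" using xt x1 by (intro power_mono) auto
    have lxt: "ln x \<le> ln t" using xt x1 by simp
    have "(ln x)^2 \<le> (ln t)^2" using lxt lx1 by (intro power_mono) auto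
    moreover have "(ln t)^2 > 0" using calculation lxp by linarith
    ultimately have "x / (ln t)^2 \<le> q" unfolding q_def using lxp x1 by (intro divide_left_mono) auto
    moreover have "(2/7) * t / (ln t)^2 \<le> 2 * (x / (ln t)^2)"
    proof -
      have "(2/7) * t \<le> (2 * A1) * t" using A1_bounds t by (intro mult_right_mono) auto
      hence "(2/7) * t \<le> 2 * (A1 * t)" by simp
      hence "(2/7) * t / (ln t)^2 \<le> 2 * (A1 * t) / (ln t)^2" by (intro divide_right_mono) auto
      thus ?thesis unfolding x_def by simp
    qed
    ultimately show "exp (-2 * q) \<le> exp (-(2/7) * t / (ln t)^2)" by simp
  qed auto
  finally show ?thesis unfolding E_def by (simp add: power_divide)
qed



definition F :: "nat \<Rightarrow> real \<Rightarrow> real" where "F k s = s^2 * (ln s)^k * E s"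

definition dF :: "nat \<Rightarrow> real \<Rightarrow> real" where
  "dF k s = s * (ln s)^(k-2) * E s * ((2/7) * s * (ln s - 2) / ln s - 2 * (ln s)^2 - real k * ln s)"

lemma F_nonneg: "s \<ge> 1 \<Longrightarrow> 0 \<le> F k s" unfolding F_def E_def by simp

lemma F_deriv:
  assumes s: "s > 1" and k: "k \<ge> 2"
  shows "((\<lambda>s. - F k s) has_real_derivative dF k s) (at s)"
proof -
  have l: "ln s > 0" using s by simp
  have "((\<lambda>s. - (s^2 * (ln s)^k * exp (-(2/7) * s / (ln s)^2))) has_real_derivative
     - (2 * s * (ln s)^k * E s + s^2 * (real k * (ln s)^(k-1) * (1/s)) * E s
        + s^2 * (ln s)^k * (E s * (-(2/7) * ((ln s)^2 - s * (2 * ln s * (1/s))) / ((ln s)^2)^2)))) (at s)"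
    using s l unfolding E_def
    by (auto intro!: derivative_eq_intros simp: power2_eq_square field_simps)
  moreover have "- (2 * s * (ln s)^k * E s + s^2 * (real k * (ln s)^(k-1) * (1/s)) * E s
        + s^2 * (ln s)^k * (E s * (-(2/7) * ((ln s)^2 - s * (2 * ln s * (1/s))) / ((ln s)^2)^2))) = dF k s"
  proof -
    obtain j where j: "k = j + 2" using k by (metis add.commute le_Suc_ex)
    show ?thesis unfolding dF_def j using s l
      by (simp add: field_simps power2_eq_square power_add)
  qed
  ultimately show ?thesis unfolding F_def E_def by simp
qed



lemma dF_lower:
  assumes s: "s \<ge> 10000" and k: "2 \<le> k" "k \<le> 4"
  shows "F (k-2) s / 14 \<le> dF k s"
proof -
  define L where "L = ln s"
  have L9: "L \<ge> 9" unfolding L_def using ln_ge9 s .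
  have Lsq: "L^2 \<le> 8/3 * sqrt s" unfolding L_def using s by (intro ln_sq_le_sqrt) auto
  have sq: "sqrt s \<ge> 100" using s real_sqrt_le_mono[of 10000 s] by simp
  have ss: "sqrt s * sqrt s = s" using s by simp
  have B1: "(2/7) * s * (L - 2) / L \<ge> s / 7"
  proof -
    have "(L - 2) / L \<ge> 1/2" using L9 by (simp add: field_simps)
    hence "(2/7 * s) * ((L - 2) / L) \<ge> (2/7 * s) * (1/2)" using s by (intro mult_left_mono) auto
    thus ?thesis by simp
  qed
  have B2: "2 * L^2 + real k * L \<le> 22/9 * L^2"
  proof -
    have "real k * L \<le> 4 * L" using k L9 by (intro mult_right_mono) auto
    also have "4 * L \<le> 4/9 * L^2" using L9 by (simp add: power2_eq_square)
    finally show ?thesis by simp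
  qed
  have B3: "22/9 * L^2 \<le> s / 14"
  proof -
    have "22/9 * L^2 \<le> 22/9 * (8/3 * sqrt s)" using Lsq by simp
    also have "\<dots> \<le> sqrt s * sqrt s / 14"
    proof -
      have "(176/27 * 14) * sqrt s \<le> sqrt s * sqrt s" using sq s by (intro mult_right_mono) auto
      thus ?thesis by simp
    qed
    finally show ?thesis using ss by simp
  qed
  have B: "(2/7) * s * (L - 2) / L - 2 * L^2 - real k * L \<ge> s / 14" using B1 B2 B3 by linarith
  have pos: "s * L^(k-2) * E s \<ge> 0" using L9 s unfolding E_def by simp
  have "dF k s = s * L^(k-2) * E s * ((2/7) * s * (L - 2) / L - 2 * L^2 - real k * L)"
    unfolding dF_def L_def ..
  also have "\<dots> \<ge> s * L^(k-2) * E s * (s / 14)" using B pos by (intro mult_left_mono) auto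
  finally show ?thesis unfolding F_def L_def by (simp add: power2_eq_square mult_ac)
qed

lemma F_lim2: "(F 2 \<longlongrightarrow> 0) at_top"
proof -
  have "((\<lambda>s::real. s^2 * (ln s)^2 * exp (-(2/7) * s / (ln s)^2)) \<longlongrightarrow> 0) at_top"
    by real_asymp
  thus ?thesis unfolding F_def[abs_def] E_def .
qed

lemma F_lim4: "(F 4 \<longlongrightarrow> 0) at_top"
proof -
  have "((\<lambda>s::real. s^2 * (ln s)^4 * exp (-(2/7) * s / (ln s)^2)) \<longlongrightarrow> 0) at_top"
    by real_asymp
  thus ?thesis unfolding F_def[abs_def] E_def .
qed



lemma F_measurable[measurable]: "F k \<in> borel_measurable borel"
  unfolding F_def[abs_def] E_def by measurable

lemma dF_measurable[measurable]: "dF k \<in> borel_measurable borel"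
  unfolding dF_def[abs_def] E_def by measurable

lemma Ioi_to_Ici:
  fixes g :: "real \<Rightarrow> real"
  assumes g: "g \<in> borel_measurable borel" and int: "set_integrable lborel {a<..} g"
  shows "set_integrable lborel {a..} g" "(LINT x:{a..}|lborel. g x) = (LINT x:{a<..}|lborel. g x)"
proof -
  have pt: "x \<noteq> a \<Longrightarrow> indicator {a<..} x *\<^sub>R g x = indicator {a..} x *\<^sub>R g x" for x
    by (simp add: indicator_def)
  have ae: "AE x in lborel. indicator {a<..} x *\<^sub>R g x = indicator {a..} x *\<^sub>R g x"
    by (rule AE_mp[OF AE_lborel_singleton[of a]], rule AE_I2, intro impI, rule pt)
  have m1: "(\<lambda>x. indicator {a..} x *\<^sub>R g x) \<in> borel_measurable lborel"
    using g by (intro borel_measurable_scaleR borel_measurable_indicator) auto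
  have m2: "(\<lambda>x. indicator {a<..} x *\<^sub>R g x) \<in> borel_measurable lborel"
    using g by (intro borel_measurable_scaleR borel_measurable_indicator) auto
  show "set_integrable lborel {a..} g"
    using integrable_cong_AE_imp[OF int[unfolded set_integrable_def] m1 ae] unfolding set_integrable_def .
  show "(LINT x:{a..}|lborel. g x) = (LINT x:{a<..}|lborel. g x)"
    unfolding set_lebesgue_integral_def using integral_cong_AE[OF m2 m1 ae] by simp
qed

lemma dF_cont: "x > 1 \<Longrightarrow> isCont (dF k) x"
  unfolding dF_def[abs_def] E_def by (intro continuous_intros) auto

lemma F_cont: "x > 1 \<Longrightarrow> isCont (F k) x"
  unfolding F_def[abs_def] E_def by (intro continuous_intros) auto

lemma tail_int:
  assumes a: "a \<ge> 10000" and k: "2 \<le> k" "k \<le> 4" and lim: "(F k \<longlongrightarrow> 0) at_top"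
  shows "set_integrable lborel {a..} (F (k-2))" "(LINT s:{a..}|lborel. F (k-2) s) \<le> 14 * F k a"
proof -
  have lowr: "F (k-2) x \<le> 14 * dF k x" "0 \<le> F (k-2) x" if "x > a" for x
    using dF_lower[of x k] F_nonneg[of x "k-2"] that a k by auto
  have h1: "ereal a < \<infinity>" by simp
  have h2: "((\<lambda>s. - F k s) has_real_derivative dF k x) (at x)" if "ereal a < ereal x" "ereal x < \<infinity>" for x
    using that a k by (intro F_deriv) auto
  have h3: "isCont (dF k) x" if "ereal a < ereal x" "ereal x < \<infinity>" for x
    using that a by (intro dF_cont) auto
  have h4: "AE x in lborel. ereal a < ereal x \<longrightarrow> ereal x < \<infinity> \<longrightarrow> 0 \<le> dF k x"
    by (rule AE_I2) (use lowr in \<open>fastforce\<close>)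
  have ca: "(F k \<longlongrightarrow> F k a) (at a)" using F_cont[of a k] a by (simp add: isCont_def)
  have "(F k \<longlongrightarrow> F k a) (at_right a)" by (rule tendsto_mono[OF at_le ca]) simp
  hence h5: "(((\<lambda>s. - F k s) \<circ> real_of_ereal) \<longlongrightarrow> - F k a) (at_right (ereal a))"
    unfolding ereal_tendsto_simps by (intro tendsto_minus)
  have h6: "(((\<lambda>s. - F k s) \<circ> real_of_ereal) \<longlongrightarrow> - 0) (at_left \<infinity>)"
    unfolding ereal_tendsto_simps by (intro tendsto_minus lim)
  note ftc = interval_integral_FTC_nonneg[OF h1 h2 h3 h4 h5 h6]
  have ein: "einterval (ereal a) \<infinity> = {a<..}" by (auto simp: einterval_def)
  have intd: "set_integrable lborel {a<..} (dF k)" using ftc(1) ein by simp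
  have vald: "(LINT x:{a<..}|lborel. dF k x) = F k a"
    using ftc(2) ein by (simp add: interval_lebesgue_integral_def)
  have int14: "set_integrable lborel {a<..} (\<lambda>x. 14 * dF k x)"
    using intd by (rule set_integrable_mult_right)
  have intF: "set_integrable lborel {a<..} (F (k-2))"
  proof (rule set_integrable_bound[OF int14])
    show "set_borel_measurable lborel {a<..} (F (k - 2))"
      unfolding set_borel_measurable_def by measurable
    show "AE x in lborel. x \<in> {a<..} \<longrightarrow> norm (F (k - 2) x) \<le> norm (14 * dF k x)"
      by (rule AE_I2) (use lowr in \<open>fastforce intro: order_trans[OF _ abs_ge_self]\<close>)
  qed
  have "(LINT x:{a<..}|lborel. F (k-2) x) \<le> (LINT x:{a<..}|lborel. 14 * dF k x)"
    by (rule set_integral_mono[OF intF int14]) (use lowr in simp)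
  also have "\<dots> = 14 * F k a" using vald by (simp add: set_integral_mult_right)
  finally have le: "(LINT x:{a<..}|lborel. F (k-2) x) \<le> 14 * F k a" .
  show "set_integrable lborel {a..} (F (k-2))" by (rule Ioi_to_Ici(1)[OF _ intF]) measurable
  show "(LINT s:{a..}|lborel. F (k-2) s) \<le> 14 * F k a"
    using Ioi_to_Ici(2)[OF _ intF] le by simp
qed



definition Fw :: "real \<Rightarrow> real" where "Fw t = (LINT \<xi>:{t..}|lborel. w1 \<xi>)"

lemma w1_le1: "w1 t \<le> 1" using w1_le_p[of t] wprod_le1[of t] by simp

lemma w1_set_int: "A \<in> sets lborel \<Longrightarrow> set_integrable lborel A w1"
  unfolding set_integrable_def by (intro integrable_mult_indicator w1_integrable)

lemma Fw_diff: assumes "s \<le> t" shows "0 \<le> Fw s - Fw t" "Fw s - Fw t \<le> t - s"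
proof -
  have i1: "integrable lborel (\<lambda>x. indicator {s..} x * w1 x)"
    using w1_set_int[of "{s..}"] unfolding set_integrable_def by simp
  have i2: "integrable lborel (\<lambda>x. indicator {t..} x * w1 x)"
    using w1_set_int[of "{t..}"] unfolding set_integrable_def by simp
  have eq: "Fw s - Fw t = (LINT x|lborel. indicator {s..} x * w1 x - indicator {t..} x * w1 x)"
    unfolding Fw_def set_lebesgue_integral_def using i1 i2 by simp
  have pt1: "0 \<le> indicator {s..} x * w1 x - indicator {t..} x * w1 x" for x
    using assms w1_nonneg[of x] by (auto simp: indicator_def)
  have pt2: "indicator {s..} x * w1 x - indicator {t..} x * w1 x \<le> indicator {s..t} x" for x
    using assms w1_nonneg[of x] w1_le1[of x] by (auto simp: indicator_def)
  show "0 \<le> Fw s - Fw t" unfolding eq using pt1 by (intro integral_nonneg_AE) auto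
  have "Fw s - Fw t \<le> (LINT x|lborel. indicator {s..t} x)"
    unfolding eq by (rule integral_mono) (use i1 i2 pt2 assms in \<open>auto simp: integrable_indicator_iff emeasure_lborel_Icc\<close>)
  also have "\<dots> = t - s" using assms by simp
  finally show "Fw s - Fw t \<le> t - s" .
qed

lemma Fw_antimono: "s \<le> t \<Longrightarrow> Fw t \<le> Fw s" using Fw_diff(1) by fastforce

lemma Fw_cont: "continuous_on A Fw"
proof (rule lipschitz_on_continuous_on[of 1], rule lipschitz_onI)
  fix x y :: real
  show "dist (Fw x) (Fw y) \<le> 1 * dist x y"
    using Fw_diff[of x y] Fw_diff[of y x] by (cases "x \<le> y") (auto simp: dist_real_def)
qed simp

lemma Fw_nonneg: "0 \<le> Fw t"
  unfolding Fw_def set_lebesgue_integral_def using w1_nonneg by (intro integral_nonneg_AE) (auto simp: indicator_def)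

lemma reflect_Iic: "(LINT \<xi>:{..t}|lborel. w1 \<xi>) = Fw (-t)"
proof -
  have "(LINT x|lborel. indicator {..t} x * w1 x)
      = \<bar>-1\<bar> *\<^sub>R (LINT x|lborel. indicator {..t} (0 + (-1) * x) * w1 (0 + (-1) * x))"
    by (rule lborel_integral_real_affine) simp
  also have "(\<lambda>x. indicator {..t} (0 + (-1) * x) * w1 (0 + (-1) * x)) = (\<lambda>x. indicator {-t..} x * w1 x)"
    by (rule ext) (auto simp: indicator_def w1_even)
  finally show ?thesis unfolding Fw_def set_lebesgue_integral_def by simp
qed

lemma W1_eq: "W 1 t = (if t \<ge> 0 then Fw t else - Fw (-t))"
  unfolding W_def Fw_def[symmetric] reflect_Iic by simp

lemma Fw0: "Fw 0 = 1/2"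
proof -
  have i1: "integrable lborel (\<lambda>x. indicator {..<0::real} x * w1 x)"
    using w1_set_int[of "{..<0}"] unfolding set_integrable_def by simp
  have i2: "integrable lborel (\<lambda>x. indicator {0::real..} x * w1 x)"
    using w1_set_int[of "{0..}"] unfolding set_integrable_def by simp
  have "1 = (LINT x|lborel. w1 x)" using w1_integral by simp
  also have "\<dots> = (LINT x|lborel. indicator {..<0::real} x * w1 x + indicator {0..} x * w1 x)"
    by (rule Bochner_Integration.integral_cong) (auto simp: indicator_def)
  also have "\<dots> = (LINT x|lborel. indicator {..<0::real} x * w1 x) + Fw 0"
    unfolding Fw_def set_lebesgue_integral_def using i1 i2 by simp
  also have "(LINT x|lborel. indicator {..<0::real} x * w1 x) = (LINT x:{..0}|lborel. w1 x)"
  proof -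
    have ae: "AE x in lborel. indicator {..<0::real} x * w1 x = indicator {..0} x * w1 x"
      by (rule AE_mp[OF AE_lborel_singleton[of 0]], rule AE_I2) (auto simp: indicator_def)
    show ?thesis unfolding set_lebesgue_integral_def
      by (rule integral_cong_AE) (use ae in auto)
  qed
  also have "\<dots> = Fw 0" using reflect_Iic[of 0] by simp
  finally show ?thesis by simp
qed

lemma Fw_le_half: "Fw t \<le> 1/2" if "t \<ge> 0"
  using Fw_antimono[OF that] Fw0 by simp

lemma Fw_tail: assumes t: "t \<ge> 10000" shows "Fw t \<le> exp 4 / 4 * (14 * F 2 t)"
proof -
  note ti = tail_int[OF t, of 2, simplified, OF F_lim2]
  have "Fw t \<le> (LINT s:{t..}|lborel. exp 4 / 4 * F 0 s)"
    unfolding Fw_def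
  proof (rule set_integral_mono[OF w1_set_int])
    show "set_integrable lborel {t..} (\<lambda>s. exp 4 / 4 * F 0 s)"
      using ti(1) by (rule set_integrable_mult_right)
    fix x assume "x \<in> {t..}"
    hence "x \<ge> 10000" using t by simp
    thus "w1 x \<le> exp 4 / 4 * F 0 x" using p_decay[of x] w1_le_p[of x] unfolding F_def by simp
  qed simp
  also have "\<dots> = exp 4 / 4 * (LINT s:{t..}|lborel. F 0 s)" by (simp add: set_integral_mult_right)
  also have "\<dots> \<le> exp 4 / 4 * (14 * F 2 t)" using ti(2) by (intro mult_left_mono) auto
  finally show ?thesis .
qed



abbreviation W1 where "W1 \<equiv> W 1"

lemma Fw_meas[measurable]: "Fw \<in> borel_measurable borel"
  by (rule borel_measurable_continuous_onI[OF Fw_cont])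

lemma W1_meas[measurable]: "W1 \<in> borel_measurable borel"
proof -
  have "W1 = (\<lambda>t. if t \<ge> 0 then Fw t else - Fw (-t))" by (rule ext) (simp add: W1_eq)
  also have "\<dots> \<in> borel_measurable borel" by measurable
  finally show ?thesis .
qed

lemma abs_W1: "\<bar>W1 t\<bar> = Fw \<bar>t\<bar>"
  using Fw_nonneg by (simp add: W1_eq)

lemma W1_nonneg: "t \<ge> 0 \<Longrightarrow> W1 t \<ge> 0" using Fw_nonneg by (simp add: W1_eq)

lemma Fw_tail2: "t \<ge> 10000 \<Longrightarrow> Fw t \<le> 7/2 * exp 4 * F 2 t"
  using Fw_tail[of t] by (simp add: mult_ac)

lemma W1_integrable: "integrable lborel W1"
proof -
  define g where "g t = indicator {10000..} t * (7/2 * exp 4 * F 2 t)" for t :: real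
  have ti: "set_integrable lborel {10000..} (F 2)" using tail_int(1)[of 10000 4] F_lim4 by simp
  have gi: "integrable lborel g"
    using set_integrable_mult_right[OF ti, of "7/2 * exp 4"] unfolding g_def set_integrable_def by simp
  have gi2: "integrable lborel (\<lambda>t. g (0 + (-1) * t))" by (rule lborel_integrable_real_affine[OF gi]) simp
  have hi: "integrable lborel (\<lambda>t. indicator {-10000..10000::real} t * (1/2::real))"
    by (intro integrable_mult_left) (auto simp: integrable_indicator_iff emeasure_lborel_Icc)
  have D: "integrable lborel (\<lambda>t. indicator {-10000..10000::real} t * (1/2::real) + g t + g (0 + (-1) * t))"
    using hi gi gi2 by simp
  show ?thesis
  proof (rule Bochner_Integration.integrable_bound[OF D], measurable, rule AE_I2)
    fix t :: real
    have gnn: "g s \<ge> 0" for s unfolding g_def using F_nonneg[of s 2] by (auto simp: indicator_def)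
    have b: "\<bar>W1 t\<bar> \<le> indicator {-10000..10000::real} t * (1/2::real) + g t + g (0 + (-1) * t)"
    proof (cases "\<bar>t\<bar> \<le> 10000")
      case True
      hence "\<bar>W1 t\<bar> \<le> 1/2" unfolding abs_W1 by (intro Fw_le_half) auto
      thus ?thesis using True gnn[of t] gnn[of "-t"] by (auto simp: indicator_def)
    next
      case False
      hence "\<bar>W1 t\<bar> \<le> 7/2 * exp 4 * F 2 \<bar>t\<bar>" unfolding abs_W1 by (intro Fw_tail2) auto
      moreover have "g t + g (0 + (-1) * t) = 7/2 * exp 4 * F 2 \<bar>t\<bar>"
        using False unfolding g_def by (auto simp: indicator_def abs_if)
      ultimately show ?thesis using False by (simp add: indicator_def)
    qed
    have "0 \<le> indicator {-10000..10000::real} t * (1/2::real) + g t + g (0 + (-1) * t)"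
      using gnn[of t] gnn[of "-t"] by simp
    thus "norm (W1 t) \<le> norm (indicator {-10000..10000::real} t * (1/2::real) + g t + g (0 + (-1) * t))"
      using b by simp
  qed
qed

definition I1 :: "real \<Rightarrow> real" where "I1 s = (LINT \<xi>:{s..}|lborel. W1 \<xi>)"

lemma W1_set_int: "A \<in> sets lborel \<Longrightarrow> set_integrable lborel A W1"
  unfolding set_integrable_def by (intro integrable_mult_indicator W1_integrable)

lemma I1_bounds: assumes s: "s > 0"
  shows "0 \<le> I1 s" "I1 s \<le> (LINT t|lborel. \<bar>W1 t\<bar>)"
proof -
  show "0 \<le> I1 s" unfolding I1_def set_lebesgue_integral_def using W1_nonneg s
    by (intro integral_nonneg_AE) (auto simp: indicator_def)
  have "I1 s \<le> (LINT t|lborel. \<bar>W1 t\<bar>)"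
    unfolding I1_def set_lebesgue_integral_def
  proof (rule integral_mono)
    show "integrable lborel (\<lambda>x. indicat_real {s..} x *\<^sub>R W1 x)"
      using W1_set_int[of "{s..}"] unfolding set_integrable_def by simp
    show "integrable lborel (\<lambda>t. \<bar>W1 t\<bar>)" using W1_integrable by (rule integrable_abs)
    fix x show "indicat_real {s..} x *\<^sub>R W1 x \<le> \<bar>W1 x\<bar>" by (auto simp: indicator_def)
  qed
  thus "I1 s \<le> (LINT t|lborel. \<bar>W1 t\<bar>)" .
qed

lemma I1_tail: assumes s: "s \<ge> 10000" shows "I1 s \<le> 49 * exp 4 * F 4 s"
proof -
  note ti = tail_int[OF s, of 4, simplified, OF F_lim4]
  have "I1 s \<le> (LINT x:{s..}|lborel. 7/2 * exp 4 * F 2 x)"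
    unfolding I1_def
  proof (rule set_integral_mono[OF W1_set_int])
    show "set_integrable lborel {s..} (\<lambda>x. 7/2 * exp 4 * F 2 x)"
      using ti(1) by (rule set_integrable_mult_right)
    fix x assume "x \<in> {s..}"
    hence "x \<ge> 10000" using s by simp
    thus "W1 x \<le> 7/2 * exp 4 * F 2 x" using Fw_tail2[of x] by (simp add: W1_eq)
  qed simp
  also have "\<dots> = 7/2 * exp 4 * (LINT x:{s..}|lborel. F 2 x)" by (simp add: set_integral_mult_right)
  also have "\<dots> \<le> 7/2 * exp 4 * (14 * F 4 s)" using ti(2) by (intro mult_left_mono) auto
  finally show ?thesis by simp
qed



lemma scale_int:
  fixes f :: "real \<Rightarrow> real"
  assumes g: "\<gamma> > 0"
  shows "(LINT x|lborel. f x) = (LINT x|lborel. \<gamma> * f (\<gamma> * x))"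
  using lborel_integral_real_affine[of \<gamma> f 0] g by simp

lemma W_scale: assumes g: "\<gamma> > 0" shows "W \<gamma> t = W1 (\<gamma> * t)"
proof -
  have A: "(LINT x:{t..}|lborel. w \<gamma> x) = (LINT x:{\<gamma>*t..}|lborel. w1 x)"
  proof -
    have "(LINT x:{\<gamma>*t..}|lborel. w1 x) = (LINT x|lborel. \<gamma> * (indicator {\<gamma>*t..} (\<gamma> * x) * w1 (\<gamma> * x)))"
      unfolding set_lebesgue_integral_def using scale_int[OF g, of "\<lambda>y. indicator {\<gamma>*t..} y * w1 y"] by simp
    also have "\<dots> = (LINT x|lborel. indicator {t..} x * w \<gamma> x)"
      using g by (intro Bochner_Integration.integral_cong) (auto simp: indicator_def w_scale[OF g])
    finally show ?thesis unfolding set_lebesgue_integral_def by simp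
  qed
  have B: "(LINT x:{..t}|lborel. w \<gamma> x) = (LINT x:{..\<gamma>*t}|lborel. w1 x)"
  proof -
    have "(LINT x:{..\<gamma>*t}|lborel. w1 x) = (LINT x|lborel. \<gamma> * (indicator {..\<gamma>*t} (\<gamma> * x) * w1 (\<gamma> * x)))"
      unfolding set_lebesgue_integral_def using scale_int[OF g, of "\<lambda>y. indicator {..\<gamma>*t} y * w1 y"] by simp
    also have "\<dots> = (LINT x|lborel. indicator {..t} x * w \<gamma> x)"
      using g by (intro Bochner_Integration.integral_cong) (auto simp: indicator_def w_scale[OF g])
    finally show ?thesis unfolding set_lebesgue_integral_def by simp
  qed
  show ?thesis unfolding W_def A B using g by (simp add: zero_le_mult_iff)
qed

lemma Iint_scale: assumes g: "\<gamma> > 0" shows "Iint \<gamma> t = I1 (\<gamma> * t) / \<gamma>"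
proof -
  have "I1 (\<gamma> * t) = (LINT x|lborel. \<gamma> * (indicator {\<gamma>*t..} (\<gamma> * x) * W1 (\<gamma> * x)))"
    unfolding I1_def set_lebesgue_integral_def using scale_int[OF g, of "\<lambda>y. indicator {\<gamma>*t..} y * W1 y"] by simp
  also have "\<dots> = \<gamma> * (LINT x|lborel. indicator {t..} x * W \<gamma> x)"
  proof -
    have "(LINT x|lborel. \<gamma> * (indicator {\<gamma>*t..} (\<gamma> * x) * W1 (\<gamma> * x)))
        = (LINT x|lborel. \<gamma> * (indicator {t..} x * W \<gamma> x))"
      using g by (intro Bochner_Integration.integral_cong) (auto simp: indicator_def W_scale[OF g])
    thus ?thesis by simp
  qed
  finally show ?thesis unfolding Iint_def set_lebesgue_integral_def using g by simp
qed

lemma L1_scale: assumes g: "\<gamma> > 0"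
  shows "(LINT t|lborel. \<bar>W \<gamma> t\<bar>) = (LINT t|lborel. \<bar>W1 t\<bar>) / \<gamma>"
proof -
  have "(LINT t|lborel. \<bar>W1 t\<bar>) = (LINT x|lborel. \<gamma> * \<bar>W1 (\<gamma> * x)\<bar>)"
    using scale_int[OF g, of "\<lambda>y. \<bar>W1 y\<bar>"] by simp
  also have "\<dots> = \<gamma> * (LINT x|lborel. \<bar>W \<gamma> x\<bar>)" by (simp add: W_scale[OF g])
  finally show ?thesis using g by simp
qed

lemma W_integrable: assumes g: "\<gamma> > 0" shows "integrable lborel (W \<gamma>)"
proof -
  have "integrable lborel (\<lambda>x. W1 (0 + \<gamma> * x))"
    using g by (intro lborel_integrable_real_affine W1_integrable) simp
  moreover have "W \<gamma> = (\<lambda>x. W1 (0 + \<gamma> * x))" by (rule ext) (simp add: W_scale[OF g])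
  ultimately show ?thesis by simp
qed



definition hh :: "real \<Rightarrow> real" where "hh \<eta> = 35 * exp 2 * \<eta>^4 * u (2/7) \<eta>"

lemma hh_10000: "hh 10000 > 1/2"
proof -
  have l9: "ln (10000::real) \<ge> 9" by (rule ln_ge9) simp
  have "(9::real)^2 \<le> (ln 10000)^2" using l9 by (intro power_mono) auto
  hence "(2/7) * 10000 / (ln (10000::real))^2 \<le> (2/7) * 10000 / 81"
    by (intro divide_left_mono) auto
  also have "\<dots> \<le> 36" by simp
  finally have ex: "-(2/7) * 10000 / (ln (10000::real))^2 \<ge> -36" by simp
  have e36: "exp (36::real) \<le> 3^36"
  proof -
    have "exp (36::real) = (exp 1)^36" by (simp add: exp_of_nat_mult[symmetric])
    also have "\<dots> \<le> 3^36" using exp_le by (intro power_mono) auto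
    finally show ?thesis .
  qed
  have "u (2/7) 10000 \<ge> exp (-36)" unfolding u_def using ex by simp
  also have "exp (-36::real) = 1 / exp 36" by (simp add: exp_minus inverse_eq_divide)
  also have "\<dots> \<ge> 1 / 3^36" using e36 by (intro divide_left_mono) auto
  finally have uu: "u (2/7) 10000 \<ge> 1 / 3^36" .
  have "hh 10000 \<ge> 35 * 1 * 10000^4 * (1 / 3^36)"
    unfolding hh_def using uu by (intro mult_mono) auto
  moreover have "35 * 1 * 10000^4 * (1 / 3^36) > (1/2::real)" by simp
  ultimately show ?thesis by linarith
qed

lemma hh_lim: "(hh \<longlongrightarrow> 0) at_top"
proof -
  have "((\<lambda>\<eta>::real. 35 * exp 2 * \<eta>^4 * exp (- (2/7) * \<eta> / (ln \<eta>)^2)) \<longlongrightarrow> 0) at_top"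
    by real_asymp
  thus ?thesis unfolding hh_def[abs_def] u_def .
qed

lemma hh_cont: "continuous_on {a..b} hh" if "a > 1"
  unfolding hh_def[abs_def] u_def using that by (intro continuous_intros) auto

lemma etaStar_ge: "etaStar \<ge> 10000"
proof -
  obtain M where M: "\<And>x. x \<ge> M \<Longrightarrow> hh x < 1/2"
    using order_tendstoD(2)[OF hh_lim, of "1/2"] by (auto simp: eventually_at_top_linorder)
  define M' where "M' = max M 10001"
  have M'1: "hh M' < 1/2" using M unfolding M'_def by simp
  have M'2: "M' \<ge> 10000" unfolding M'_def by simp
  obtain \<eta>0 where e0: "10000 \<le> \<eta>0" "\<eta>0 \<le> M'" "hh \<eta>0 = 1/2"
    using IVT2'[of hh M' "1/2" 10000] M'1 hh_10000 M'2 hh_cont[of 10000 M'] by force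
  define S where "S = {2..M'} \<inter> hh -` {1/2}"
  have Sc: "closed S" unfolding S_def by (intro continuous_closed_preimage hh_cont) auto
  have Sne: "\<eta>0 \<in> S" unfolding S_def using e0 by auto
  have Sb: "bdd_above S" unfolding S_def by (auto intro: bdd_aboveI[of _ M'])
  have sS: "Sup S \<in> S" using closed_contains_Sup[OF _ Sb Sc] Sne by auto
  have sge: "Sup S \<ge> \<eta>0" using cSup_upper[OF Sne Sb] .
  have "etaStar = Sup S"
    unfolding etaStar_def
  proof (rule Greatest_equality)
    show "Sup S > 1 \<and> 35 * exp 2 * (Sup S)^4 * u (2/7) (Sup S) = 1/2"
      using sS unfolding S_def hh_def by auto
    fix y assume y: "y > 1 \<and> 35 * exp 2 * y^4 * u (2/7) y = 1/2"
    show "y \<le> Sup S"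
    proof (cases "y \<le> 2")
      case True thus ?thesis using sge e0 by simp
    next
      case False
      have "y \<le> M'"
      proof (rule ccontr)
        assume "\<not> y \<le> M'"
        hence "hh y < 1/2" using M unfolding M'_def by simp
        thus False using y unfolding hh_def by simp
      qed
      hence "y \<in> S" unfolding S_def hh_def using y False by auto
      thus ?thesis by (rule cSup_upper[OF _ Sb])
    qed
  qed
  thus ?thesis using sge e0 by simp
qed

lemma exp2_le: "exp (2::real) \<le> 8"
proof -
  have "exp (2::real) = (exp 1)^2" by (simp add: exp_of_nat_mult[symmetric])
  also have "\<dots> \<le> (272/100)^2" using e_less_272 by (intro power_mono) auto
  also have "\<dots> \<le> 8" by (simp add: power2_eq_square)
  finally show ?thesis .
qed

lemma u_E: "u (2/7) \<eta> = E \<eta>" unfolding u_def E_def by simp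

lemma GW_tail: assumes "\<eta> \<ge> 10000" shows "7/2 * exp 4 * F 2 \<eta> \<le> 35 * exp 2 * \<eta>^4 * u (2/7) \<eta>"
proof -
  have e4: "exp (4::real) = exp 2 * exp 2" by (simp add: exp_add[symmetric])
  have l0: "0 \<le> ln \<eta>" "ln \<eta> \<le> \<eta>" using assms by (auto intro: ln_le_minus_one[THEN order_trans])
  have "(ln \<eta>)^2 \<le> \<eta>^2" using l0 by (intro power_mono) auto
  hence "exp 2 * (ln \<eta>)^2 \<le> 8 * \<eta>^2" using exp2_le by (intro mult_mono) auto
  hence "7/2 * exp 2 * (ln \<eta>)^2 \<le> 35 * \<eta>^2" using zero_le_power2[of \<eta>] by linarith
  hence *: "(7/2 * exp 2 * (ln \<eta>)^2) * (exp 2 * \<eta>^2 * E \<eta>) \<le> (35 * \<eta>^2) * (exp 2 * \<eta>^2 * E \<eta>)"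
    by (intro mult_right_mono) (auto simp: E_def)
  have L: "7/2 * exp 4 * F 2 \<eta> = (7/2 * exp 2 * (ln \<eta>)^2) * (exp 2 * \<eta>^2 * E \<eta>)"
    unfolding F_def e4 by (simp only: mult_ac)
  have p4: "\<eta>^4 = \<eta>^2 * \<eta>^2" by (simp flip: power_add)
  have R: "35 * exp 2 * \<eta>^4 * u (2/7) \<eta> = (35 * \<eta>^2) * (exp 2 * \<eta>^2 * E \<eta>)"
    unfolding u_E p4 by (simp only: mult_ac)
  show ?thesis unfolding L R by (rule *)
qed

lemma GI_tail: assumes "\<eta> \<ge> 10000" shows "49 * exp 4 * F 4 \<eta> \<le> 130 * exp 2 * \<eta>^10 * u (2/7) \<eta>"
proof -
  have e4: "exp (4::real) = exp 2 * exp 2" by (simp add: exp_add[symmetric])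
  have l0: "0 \<le> ln \<eta>" "ln \<eta> \<le> \<eta>" using assms by (auto intro: ln_le_minus_one[THEN order_trans])
  have l4: "(ln \<eta>)^4 \<le> \<eta>^4" using l0 by (intro power_mono) auto
  have p1: "(2::real)^4 \<le> \<eta>^4" using assms by (intro power_mono) auto
  have p2: "392 \<le> 130 * \<eta>^4" using p1 by simp
  have "exp 2 * 49 * (ln \<eta>)^4 \<le> 8 * 49 * \<eta>^4" using exp2_le l4
    by (intro mult_mono) auto
  also have "\<dots> \<le> 130 * \<eta>^4 * \<eta>^4" using p2 by (intro mult_right_mono) auto
  finally have "exp 2 * 49 * (ln \<eta>)^4 \<le> 130 * \<eta>^4 * \<eta>^4" .
  hence *: "(exp 2 * 49 * (ln \<eta>)^4) * (exp 2 * \<eta>^2 * E \<eta>) \<le> (130 * \<eta>^4 * \<eta>^4) * (exp 2 * \<eta>^2 * E \<eta>)"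
    by (intro mult_right_mono) (auto simp: E_def)
  have L: "49 * exp 4 * F 4 \<eta> = (exp 2 * 49 * (ln \<eta>)^4) * (exp 2 * \<eta>^2 * E \<eta>)"
    unfolding F_def e4 by (simp only: mult_ac)
  have p10: "\<eta>^10 = \<eta>^4 * \<eta>^4 * \<eta>^2" by (simp flip: power_add)
  have R: "130 * exp 2 * \<eta>^10 * u (2/7) \<eta> = (130 * \<eta>^4 * \<eta>^4) * (exp 2 * \<eta>^2 * E \<eta>)"
    unfolding u_E p10 by (simp only: mult_ac)
  show ?thesis unfolding L R by (rule *)
qed



lemma absW: "\<gamma> > 0 \<Longrightarrow> \<bar>W \<gamma> t\<bar> = Fw (\<gamma> * \<bar>t\<bar>)"
  using W_scale[of \<gamma> t] abs_W1[of "\<gamma> * t"] by (simp add: abs_mult)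

lemma Fw_GW: assumes "\<eta> \<ge> 0" shows "Fw \<eta> \<le> GW \<eta>"
proof (cases "\<eta> \<le> etaStar")
  case True thus ?thesis unfolding GW_def using Fw_le_half[OF assms] by simp
next
  case False
  hence e: "\<eta> \<ge> 10000" using etaStar_ge by simp
  have "Fw \<eta> \<le> 7/2 * exp 4 * F 2 \<eta>" by (rule Fw_tail2[OF e])
  also have "\<dots> \<le> 35 * exp 2 * \<eta>^4 * u (2/7) \<eta>" by (rule GW_tail[OF e])
  finally show ?thesis unfolding GW_def using False by simp
qed

theorem mainTheorem4:
  shows "\<exists>K \<zeta>s. \<zeta>s > 0 \<and> (\<forall>\<gamma>::real. \<gamma> > 0 \<longrightarrow>
      bounded (range (W \<gamma>))
    \<and> (\<forall>t. t \<noteq> 0 \<longrightarrow> W \<gamma> (- t) = - W \<gamma> t)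
    \<and> integrable lborel (W \<gamma>)
    \<and> continuous_on {0..} (\<lambda>t. \<bar>W \<gamma> t\<bar>)
    \<and> antimono_on {0..} (\<lambda>t. \<bar>W \<gamma> t\<bar>)
    \<and> (SUP t. \<bar>W \<gamma> t\<bar>) = 1/2 \<and> W \<gamma> 0 = 1/2
    \<and> (\<forall>t. \<bar>W \<gamma> t\<bar> \<le> GW (\<gamma> * \<bar>t\<bar>))
    \<and> (LINT t|lborel. \<bar>W \<gamma> t\<bar>) \<le> K / \<gamma>
    \<and> (\<forall>t>0. \<bar>Iint \<gamma> t\<bar> \<le> GI K \<zeta>s \<gamma> (\<gamma> * \<bar>t\<bar>)))"
proof (intro exI conjI allI impI)
  define K where "K = 2 * (LINT t|lborel. \<bar>W1 t\<bar>)"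
  have K0: "K \<ge> 0" unfolding K_def by simp
  show "(10000::real) > 0" by simp
  fix \<gamma> :: real assume g: "\<gamma> > 0"
  have half: "\<bar>W \<gamma> t\<bar> \<le> 1/2" for t unfolding absW[OF g] using g by (intro Fw_le_half) auto
  show "bounded (range (W \<gamma>))" unfolding bounded_iff using half by (intro exI[of _ "1/2"]) auto
  show "W \<gamma> (- t) = - W \<gamma> t" if "t \<noteq> 0" for t
    using that g by (simp add: W_scale[OF g] W1_eq)
  show "integrable lborel (W \<gamma>)" by (rule W_integrable[OF g])
  have eq0: "\<bar>W \<gamma> t\<bar> = Fw (\<gamma> * t)" if "t \<in> {0..}" for t using that g by (simp add: absW)
  show "continuous_on {0..} (\<lambda>t. \<bar>W \<gamma> t\<bar>)"
  proof (rule continuous_on_cong[THEN iffD2, OF refl])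
    show "continuous_on {0..} (\<lambda>t. Fw (\<gamma> * t))"
      by (rule continuous_on_compose2[OF Fw_cont[of UNIV]]) (auto intro!: continuous_intros)
  qed (use eq0 in auto)
  show "antimono_on {0..} (\<lambda>t. \<bar>W \<gamma> t\<bar>)"
    unfolding monotone_on_def using eq0 g by (auto intro!: Fw_antimono mult_left_mono)
  have W0: "W \<gamma> 0 = 1/2" using g by (simp add: W_scale[OF g] W1_eq Fw0)
  show "W \<gamma> 0 = 1/2" by (rule W0)
  show "(SUP t. \<bar>W \<gamma> t\<bar>) = 1/2"
    by (rule cSup_eq_maximum) (use half W0 in \<open>auto intro: range_eqI[of _ _ 0]\<close>)
  show "\<bar>W \<gamma> t\<bar> \<le> GW (\<gamma> * \<bar>t\<bar>)" for t unfolding absW[OF g] using g by (intro Fw_GW) auto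
  show "(LINT t|lborel. \<bar>W \<gamma> t\<bar>) \<le> K / \<gamma>"
    unfolding L1_scale[OF g] K_def using g by (simp add: divide_right_mono)
  fix t :: real assume t: "t > 0"
  have gt: "\<gamma> * t > 0" using g t by simp
  have Ieq: "\<bar>Iint \<gamma> t\<bar> = I1 (\<gamma> * t) / \<gamma>" using I1_bounds(1)[OF gt] g by (simp add: Iint_scale)
  show "\<bar>Iint \<gamma> t\<bar> \<le> GI K 10000 \<gamma> (\<gamma> * \<bar>t\<bar>)"
  proof (cases "\<gamma> * t \<le> 10000")
    case True
    have "I1 (\<gamma> * t) \<le> K / 2" using I1_bounds(2)[OF gt] unfolding K_def by simp
    hence "I1 (\<gamma> * t) / \<gamma> \<le> (K / 2) / \<gamma>" using g by (intro divide_right_mono) auto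
    thus ?thesis unfolding Ieq GI_def using True t g by simp
  next
    case False
    have "I1 (\<gamma> * t) \<le> 49 * exp 4 * F 4 (\<gamma> * t)" using False by (intro I1_tail) auto
    also have "\<dots> \<le> 130 * exp 2 * (\<gamma> * t)^10 * u (2/7) (\<gamma> * t)" using False by (intro GI_tail) auto
    finally show ?thesis unfolding Ieq GI_def using False t g by (simp add: divide_right_mono)
  qed
qed


end
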